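(* Suppose that $K$ is a totally disconnected compact Hausdorff space which has no $G_\delta$ point and $\mathcal A$ is a countable Boolean subalgebra of $\mathrm{Clop}(K)$. Then for every ultrafilter $\mathcal U$ of $\mathcal A$ there is $V\in\mathrm{Clop}(K)\setminus\mathcal A$ which splits $\mathcal U$.
   Context: $\mathrm{Clop}(K)$ is the Boolean algebra of clopen subsets of $K$. A $G_\delta$ point is one that is an intersection of countably many open sets. For Boolean algebras $\mathcal A\subseteq\mathcal B$, $B\in\mathcal B\setminus\mathcal A$ splits an ultrafilter $\mathcal U$ of $\mathcal A$ if $A\wedge B\neq0\neq A\wedge(1-B)$ for all $A\in\mathcal U$. *)

theory Defs
  imports "HOL-Analysis.Analysis"
begin

definition totally_disconnected_space :: "'a::topological_space itself \<Rightarrow> bool" where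
  "totally_disconnected_space _ \<longleftrightarrow> (\<forall>S::'a set. connected S \<longrightarrow> (\<exists>a. S \<subseteq> {a}))"

definition Clop :: "'a::topological_space set set" where
  "Clop = {S. open S \<and> closed S}"

definition boolean_subalgebra :: "'a set set \<Rightarrow> bool" where
  "boolean_subalgebra \<A> \<longleftrightarrow>
     {} \<in> \<A> \<and> UNIV \<in> \<A> \<and>
     (\<forall>a\<in>\<A>. - a \<in> \<A>) \<and>
     (\<forall>a\<in>\<A>. \<forall>b\<in>\<A>. a \<union> b \<in> \<A>) \<and>
     (\<forall>a\<in>\<A>. \<forall>b\<in>\<A>. a \<inter> b \<in> \<A>)"

definition ultrafilter_of :: "'a set set \<Rightarrow> 'a set set \<Rightarrow> bool" where
  "ultrafilter_of \<A> \<U> \<longleftrightarrow>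
     \<U> \<subseteq> \<A> \<and> UNIV \<in> \<U> \<and> {} \<notin> \<U> \<and>
     (\<forall>a\<in>\<U>. \<forall>b\<in>\<U>. a \<inter> b \<in> \<U>) \<and>
     (\<forall>a\<in>\<U>. \<forall>b\<in>\<A>. a \<subseteq> b \<longrightarrow> b \<in> \<U>) \<and>
     (\<forall>a\<in>\<A>. a \<in> \<U> \<or> - a \<in> \<U>)"

definition splits :: "'a set \<Rightarrow> 'a set set \<Rightarrow> bool" where
  "splits B \<U> \<longleftrightarrow> (\<forall>a\<in>\<U>. a \<inter> B \<noteq> {} \<and> a \<inter> - B \<noteq> {})"

end

theory Submission
  imports Defs
begin

lemma Hausdorff_space_euclidean_t2: "Hausdorff_space (euclidean :: 'a::t2_space topology)"
  unfolding Hausdorff_space_def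
  by (metis disjnt_def hausdorff open_openin topspace_euclidean)

lemma sep_clopen:
  fixes x y :: "'a::t2_space"
  assumes "compact (UNIV :: 'a set)"
    and "totally_disconnected_space TYPE('a)"
    and "x \<noteq> y"
  shows "\<exists>V. open V \<and> closed V \<and> x \<in> V \<and> y \<notin> V"
proof -
  have cc: "connected_component_of_set euclidean x = {x}"
  proof -
    have "connectedin euclidean (connected_component_of_set euclidean x)"
      by (simp add: connectedin_connected_component_of)
    then have "connected (connected_component_of_set euclidean x)"
      by (simp add: connectedin_iff_connected)
    then obtain a where "connected_component_of_set euclidean x \<subseteq> {a}"
      using assms(2) unfolding totally_disconnected_space_def by blast
    moreover have "x \<in> connected_component_of_set euclidean x"
      by (simp add: connected_component_of_refl)
    ultimately show ?thesis by blast
  qed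
  have "{x} \<in> connected_components_of euclidean"
    using cc unfolding connected_components_of_def by (metis UNIV_I image_eqI topspace_euclidean)
  moreover have "locally_compact_space (euclidean :: 'a topology)"
    using assms(1) by (simp add: compact_imp_locally_compact_space compact_space_def compactin_euclidean_iff)
  ultimately have "separated_between euclidean {x} {y}"
    using assms(3)
    by (intro separated_between_compact_connected_component)
       (auto simp: Hausdorff_space_euclidean_t2 compactin_euclidean_iff disjnt_def)
  then obtain U V where UV: "open U" "open V" "U \<union> V = UNIV" "disjnt U V" "x \<in> U" "y \<in> V"
    unfolding separated_between_def by auto
  have "U = - V" using UV(3,4) by (auto simp: disjnt_def)
  then have "closed U" using UV(2) by auto
  have "y \<notin> U" using UV(4,6) by (auto simp: disjnt_def)
  then show ?thesis using UV(1,5) \<open>closed U\<close> by blast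
qed

theorem lemma2p2:
  fixes \<A> \<U> :: "'a::t2_space set set"
  assumes "compact (UNIV :: 'a set)"
    and "totally_disconnected_space TYPE('a)"
    and "\<forall>x::'a. \<not> gdelta {x}"
    and "countable \<A>"
    and "boolean_subalgebra \<A>"
    and "\<A> \<subseteq> Clop"
    and "ultrafilter_of \<A> \<U>"
  shows "\<exists>V \<in> Clop - \<A>. splits V \<U>"
proof -
  have uf1: "\<U> \<subseteq> \<A>" and uf2: "UNIV \<in> \<U>" and uf3: "{} \<notin> \<U>"
    and uf4: "\<And>a b. a \<in> \<U> \<Longrightarrow> b \<in> \<U> \<Longrightarrow> a \<inter> b \<in> \<U>"
    and uf6: "\<And>a. a \<in> \<A> \<Longrightarrow> a \<in> \<U> \<or> - a \<in> \<U>"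
    using assms(7) unfolding ultrafilter_of_def by blast+
  have UC: "\<U> \<subseteq> Clop" using uf1 assms(6) by (rule order_trans)
  have cnt: "countable \<U>" using uf1 assms(4) countable_subset by blast
  have ne: "\<U> \<noteq> {}" using uf2 by blast
  have fin: "\<Inter>F \<in> \<U>" if "finite F" "F \<subseteq> \<U>" for F
    using that
  proof (induction F rule: finite_induct)
    case empty then show ?case using uf2 by simp
  next
    case (insert a F) then show ?case using uf4 by simp
  qed
  have "UNIV \<inter> \<Inter>\<U> \<noteq> {}"
  proof (rule compact_imp_fip[OF assms(1)])
    show "\<And>T. T \<in> \<U> \<Longrightarrow> closed T" using UC by (auto simp: Clop_def)
    show "\<And>F. finite F \<Longrightarrow> F \<subseteq> \<U> \<Longrightarrow> UNIV \<inter> \<Inter>F \<noteq> {}"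
    proof -
      fix F assume "finite F" "F \<subseteq> \<U>"
      then have "\<Inter>F \<in> \<U>" by (rule fin)
      then have "\<Inter>F \<noteq> {}" using uf3 by auto
      then show "UNIV \<inter> \<Inter>F \<noteq> {}" by simp
    qed
  qed
  then obtain x where x: "x \<in> \<Inter>\<U>" by blast
  have gd: "gdelta (\<Inter>\<U>)"
  proof -
    have "\<U> = range (from_nat_into \<U>)" using cnt ne by (simp add: range_from_nat_into)
    moreover have "\<And>n. open (from_nat_into \<U> n)"
    proof -
      fix n
      have "from_nat_into \<U> n \<in> \<U>" using ne by (rule from_nat_into)
      then show "open (from_nat_into \<U> n)" using UC by (auto simp: Clop_def)
    qed
    then have "gdelta (\<Inter>(range (from_nat_into \<U>)))" by (rule gdelta.intros)
    ultimately show ?thesis by simp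
  qed
  have "\<Inter>\<U> \<noteq> {x}" using gd assms(3) by auto
  then obtain y where y: "y \<in> \<Inter>\<U>" "y \<noteq> x" using x by blast
  obtain V where V: "open V" "closed V" "x \<in> V" "y \<notin> V"
    using sep_clopen[OF assms(1,2), of x y] y(2) by auto
  have "V \<in> Clop" using V by (simp add: Clop_def)
  moreover have "V \<notin> \<A>"
  proof
    assume "V \<in> \<A>"
    then have "V \<in> \<U> \<or> - V \<in> \<U>" by (rule uf6)
    then show False using V x y by blast
  qed
  moreover have "splits V \<U>"
    unfolding splits_def using V x y by blast
  ultimately show ?thesis by blast
qed

end
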